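(* Let $(M,g)$ be a Riemannian manifold isometrically immersed into a Riemannian manifold $(N,\widetilde g)$ carrying a Riemannian $(a,b)$-complex metallic structure $\widetilde P$, and let $P,Q,R,S$ be defined by $\widetilde PX=PX+QX$ and $\widetilde P\xi=R\xi+S\xi$ (tangent plus normal parts) for $X$ tangent and $\xi$ normal to $M$. Then $M$ is invariant (i.e. $\widetilde P(T_xM)\subset T_xM$ for all $x\in M$) if and only if $P$ is a non-trivial Riemannian $(a,b)$-complex metallic structure on $M$. In particular, invariant submanifolds of Riemannian manifolds with a Riemannian $(a,b)$-complex metallic structure are even-dimensional.
   Context: For $a,b>0$ with $a<2\sqrt b$, an $(a,b)$-complex metallic structure is a $(1,1)$-tensor $J$ with $J^2+aJ+b\,\mathrm{id}=0$; it is Riemannian for a metric $g$ if $g(JX,Y)=-g(X,JY)-a\,g(X,Y)$. *)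

theory Defs
  imports "HOL-Analysis.Analysis"
begin

definition complex_metallic_on :: "'a::real_inner set \<Rightarrow> real \<Rightarrow> real \<Rightarrow> ('a \<Rightarrow> 'a) \<Rightarrow> bool" where
  "complex_metallic_on W a b J \<longleftrightarrow>
     (\<forall>X\<in>W. J X \<in> W \<and> J (J X) + a *\<^sub>R J X + b *\<^sub>R X = 0)"

definition riem_complex_metallic_on :: "'a::real_inner set \<Rightarrow> real \<Rightarrow> real \<Rightarrow> ('a \<Rightarrow> 'a) \<Rightarrow> bool" where
  "riem_complex_metallic_on W a b J \<longleftrightarrow>
     complex_metallic_on W a b J \<and>
     (\<forall>X\<in>W. \<forall>Y\<in>W. inner (J X) Y = - inner X (J Y) - a * inner X Y)"

end

theory Submission imports Defs begin

lemma even_dim_aux: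
  fixes J :: "'n::euclidean_space \<Rightarrow> 'n" and a b :: real
  assumes lin: "linear J" and disc: "a^2 < 4*b"
    and sq: "\<And>x. J (J x) + a *\<^sub>R J x + b *\<^sub>R x = 0"
    and comp: "\<And>x y. inner (J x) y = - inner x (J y) - a * inner x y"
  shows "subspace W \<Longrightarrow> J ` W \<subseteq> W \<Longrightarrow> dim W = n \<Longrightarrow> even n"
proof (induction n arbitrary: W rule: less_induct)
  case (less n W)
  show ?case
  proof (cases "n = 0")
    case True then show ?thesis by simp
  next
    case False
    have "\<not> W \<subseteq> {0}" using False less.prems(3) dim_eq_0 by metis
    then obtain v where v: "v \<in> W" "v \<noteq> 0" by auto
    have JJ: "J (J v) = - a *\<^sub>R J v - b *\<^sub>R v" using sq[of v] by (simp add: algebra_simps eq_neg_iff_add_eq_0)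
    define A where "A = span {v, J v}"
    have Jv: "J v \<in> W" using less.prems v by auto
    have AW: "A \<subseteq> W" unfolding A_def using v Jv less.prems(1) by (simp add: span_minimal)
    have notin: "J v \<notin> span {v}"
    proof
      assume "J v \<in> span {v}"
      then obtain c where c: "J v = c *\<^sub>R v" by (auto simp: span_singleton)
      have "J (J v) = (c*c) *\<^sub>R v" using c lin by (simp add: linear_scale)
      hence "(c*c + a*c + b) *\<^sub>R v = 0" using sq[of v] c by (simp add: algebra_simps)
      hence "c*c + a*c + b = 0" using v by simp
      moreover have "c*c + a*c + b > 0"
      proof -
        have "(2*c + a)^2 \<ge> 0" by simp
        hence "4*(c*c+a*c+b) = (2*c+a)^2 + (4*b - a^2)" by (simp add: power2_eq_square algebra_simps)
        thus ?thesis using disc \<open>(2*c + a)^2 \<ge> 0\<close> by (smt (verit))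
      qed
      ultimately show False by simp
    qed
    have neq: "J v \<noteq> v" using notin by (metis span_base singletonI)
    have "independent {J v, v}"
      using notin v neq by (simp add: independent_insert)
    hence ind: "independent {v, J v}" by (simp add: insert_commute)
    have dimA: "dim A = 2" unfolding A_def using dim_span_eq_card_independent[OF ind] neq by simp
    define U where "U = {y \<in> W. \<forall>x \<in> A. orthogonal x y}"
    have dU: "dim U + 2 = n" using dim_subspace_orthogonal_to_vectors[of A W] AW less.prems dimA
      unfolding U_def A_def by simp
    have JA: "J ` A \<subseteq> A"
    proof -
      have "J ` {v, J v} \<subseteq> A"
      proof -
        have "J v \<in> A" "v \<in> A" unfolding A_def by (simp_all add: span_base)
        hence "- a *\<^sub>R J v - b *\<^sub>R v \<in> A" unfolding A_def by (intro span_diff span_mul)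
        thus ?thesis using \<open>J v \<in> A\<close> JJ by simp
      qed
      hence "span (J ` {v, J v}) \<subseteq> A" unfolding A_def by (simp add: span_minimal)
      thus ?thesis unfolding A_def using span_linear_image[OF lin] by metis
    qed
    have sU: "subspace U" unfolding U_def
      using less.prems(1) unfolding subspace_def orthogonal_def
      by (simp add: inner_add_right)
    have JU: "J ` U \<subseteq> U"
    proof
      fix z assume "z \<in> J ` U"
      then obtain y where y: "y \<in> U" "z = J y" by auto
      have "J y \<in> W" using y less.prems unfolding U_def by auto
      moreover have "orthogonal x (J y)" if "x \<in> A" for x
      proof -
        have "inner (J x) y = 0" using JA that y unfolding U_def orthogonal_def by auto
        moreover have "inner x y = 0" using that y unfolding U_def orthogonal_def by auto
        ultimately show ?thesis using comp[of x y] unfolding orthogonal_def by simp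
      qed
      ultimately show "z \<in> U" using y unfolding U_def by auto
    qed
    have "even (dim U)" using less.IH[of "dim U" U] dU sU JU by simp
    thus ?thesis using dU by auto
  qed
qed

lemma riem_norm:
  assumes "riem_complex_metallic_on W a b J" "X \<in> W"
  shows "inner (J X) (J X) = b * inner X X"
proof -
  have JX: "J X \<in> W" and sq: "J (J X) + a *\<^sub>R J X + b *\<^sub>R X = 0"
    using assms unfolding riem_complex_metallic_on_def complex_metallic_on_def by auto
  have "inner (J X) (J X) = - inner X (J (J X)) - a * inner X (J X)"
    using assms JX unfolding riem_complex_metallic_on_def by auto
  moreover have "J (J X) = - (a *\<^sub>R J X) - b *\<^sub>R X" using sq
    by (metis add_diff_cancel_right' diff_0 diff_add_eq)
  ultimately show ?thesis by (simp add: inner_diff_right inner_minus_right)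
qed

theorem proposition4p4:
  fixes a b :: real
    and Mpts :: "'m set"
    and TM :: "'m \<Rightarrow> 'n::euclidean_space set"
    and Pt P Q :: "'m \<Rightarrow> 'n \<Rightarrow> 'n"
  assumes "a > 0" and "b > 0" and "a < 2 * sqrt b"
    and "\<forall>x\<in>Mpts. subspace (TM x) \<and> dim (TM x) \<ge> 1"
    and "\<forall>x\<in>Mpts. linear (Pt x) \<and> riem_complex_metallic_on UNIV a b (Pt x)"
    and "\<forall>x\<in>Mpts. \<forall>X\<in>TM x. P x X \<in> TM x \<and> (\<forall>Y\<in>TM x. inner (Q x X) Y = 0)
                          \<and> Pt x X = P x X + Q x X"
  shows "((\<forall>x\<in>Mpts. Pt x ` TM x \<subseteq> TM x) \<longleftrightarrow>
           (\<forall>x\<in>Mpts. riem_complex_metallic_on (TM x) a b (P x) \<and> (\<exists>X\<in>TM x. P x X \<noteq> 0)))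
         \<and> ((\<forall>x\<in>Mpts. Pt x ` TM x \<subseteq> TM x) \<longrightarrow> (\<forall>x\<in>Mpts. even (dim (TM x))))"
proof -
  have disc: "a^2 < 4*b"
  proof -
    have "a^2 < (2 * sqrt b)^2" using assms(1,3) by (intro power_strict_mono) auto
    also have "\<dots> = 4*b" using assms(2) by (simp add: power_mult_distrib)
    finally show ?thesis .
  qed
  have fwd: "riem_complex_metallic_on (TM x) a b (P x) \<and> (\<exists>X\<in>TM x. P x X \<noteq> 0)"
    if x: "x \<in> Mpts" and inv: "Pt x ` TM x \<subseteq> TM x" for x
  proof -
    have sub: "subspace (TM x)" and d1: "dim (TM x) \<ge> 1" using assms(4) x by auto
    have R: "riem_complex_metallic_on UNIV a b (Pt x)" using assms(5) x by auto
    have eq: "P x X = Pt x X" if X: "X \<in> TM x" for X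
    proof -
      have h: "P x X \<in> TM x" "\<forall>Y\<in>TM x. inner (Q x X) Y = 0" "Pt x X = P x X + Q x X"
        using assms(6) x X by auto
      have "Q x X = Pt x X - P x X" using h(3) by simp
      moreover have "Pt x X \<in> TM x" using inv X by auto
      ultimately have "Q x X \<in> TM x" using h(1) sub by (simp add: subspace_diff)
      hence "inner (Q x X) (Q x X) = 0" using h(2) by auto
      hence "Q x X = 0" by simp
      thus ?thesis using h(3) by simp
    qed
    have cm: "riem_complex_metallic_on (TM x) a b (P x)"
      unfolding riem_complex_metallic_on_def complex_metallic_on_def
    proof (intro conjI ballI)
      fix X assume X: "X \<in> TM x"
      have PX: "P x X = Pt x X" using eq X by simp
      have PtX: "Pt x X \<in> TM x" using inv X by auto
      show "P x X \<in> TM x" using PX PtX by simp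
      have "Pt x (Pt x X) + a *\<^sub>R Pt x X + b *\<^sub>R X = 0"
        using R unfolding riem_complex_metallic_on_def complex_metallic_on_def by auto
      thus "P x (P x X) + a *\<^sub>R P x X + b *\<^sub>R X = 0" using PX eq[OF PtX] by simp
      fix Y assume Y: "Y \<in> TM x"
      show "inner (P x X) Y = - inner X (P x Y) - a * inner X Y"
        using R PX eq[OF Y] unfolding riem_complex_metallic_on_def by auto
    qed
    have "\<not> TM x \<subseteq> {0}" using d1 dim_eq_0 by (metis not_one_le_zero)
    then obtain X where X: "X \<in> TM x" "X \<noteq> 0" by auto
    have "inner (P x X) (P x X) = b * inner X X" using riem_norm[OF cm X(1)] .
    moreover have "b * inner X X \<noteq> 0" using assms(2) X(2) by simp
    ultimately have "P x X \<noteq> 0" by auto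
    with cm X show ?thesis by auto
  qed
  have bwd: "Pt x ` TM x \<subseteq> TM x"
    if x: "x \<in> Mpts" and cm: "riem_complex_metallic_on (TM x) a b (P x)" for x
  proof
    fix Z assume "Z \<in> Pt x ` TM x"
    then obtain X where X: "X \<in> TM x" "Z = Pt x X" by auto
    have R: "riem_complex_metallic_on UNIV a b (Pt x)" using assms(5) x by auto
    have h: "P x X \<in> TM x" "\<forall>Y\<in>TM x. inner (Q x X) Y = 0" "Pt x X = P x X + Q x X"
      using assms(6) x X by auto
    have n1: "inner (Pt x X) (Pt x X) = b * inner X X" using riem_norm[OF R] by simp
    have n2: "inner (P x X) (P x X) = b * inner X X" using riem_norm[OF cm X(1)] .
    have o: "inner (Q x X) (P x X) = 0" using h by auto
    have "inner (Pt x X) (Pt x X) = inner (P x X) (P x X) + 2 * inner (Q x X) (P x X) + inner (Q x X) (Q x X)"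
      using h(3) by (simp add: inner_add_left inner_add_right inner_commute)
    hence "inner (Q x X) (Q x X) = 0" using n1 n2 o by simp
    hence "Q x X = 0" by simp
    thus "Z \<in> TM x" using X h by simp
  qed
  have ev: "even (dim (TM x))" if x: "x \<in> Mpts" and inv: "Pt x ` TM x \<subseteq> TM x" for x
  proof -
    have R: "riem_complex_metallic_on UNIV a b (Pt x)" and lin: "linear (Pt x)" using assms(5) x by auto
    show ?thesis
      using even_dim_aux[OF lin disc, of "TM x" "dim (TM x)"] R assms(4) x inv
      unfolding riem_complex_metallic_on_def complex_metallic_on_def by auto
  qed
  show ?thesis using fwd bwd ev by blast
qed

end
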